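(* Let $q$ be a prime power and let $m,r,k,\alpha$ be positive integers. If $(\Sigma,\mathcal{A})$ with $\Sigma=\mathrm{PG}(m-1,q)$ is an $(m;\,r+1,\,k,\,r,\,\alpha,\,1)$-functional repair code, then $$m\le \sum_{i=1}^{k}\min\bigl(\alpha,\,(r-k)+i\bigr).$$
   Context: Dimensions are projective: a $(d-1)$-dimensional subspace of $\mathrm{PG}(m-1,q)$ corresponds to a $d$-dimensional subspace of $\mathbb{F}_q^m$, and $\langle\cdot\rangle$ denotes span. A subspace $U'$ of $\Sigma=\mathrm{PG}(m-1,q)$ is obtained from a set $\mathcal{U}$ of subspaces of $\Sigma$ by $(r,\beta)$-repair if there are $r$ distinct members $U_{i_1},\dots,U_{i_r}$ of $\mathcal{U}$ and, for each $j$, a $(\beta-1)$-dimensional subspace $W_{i_j}\subseteq U_{i_j}$ such that $U'\subseteq\langle W_{i_1},\dots,W_{i_r}\rangle$. An $(m;n,k,r,\alpha,\beta)$-functional repair code is a pair $(\Sigma,\mathcal{A})$ where $\Sigma=\mathrm{PG}(m-1,q)$ and $\mathcal{A}$ is a collection of $(n-1)$-sets of $(\alpha-1)$-dimensional subspaces of $\Sigma$ such that: (Recovery) every $\mathcal{U}\in\mathcal{A}$ contains $k$ members whose span is $\Sigma$; (Repair) for every $\mathcal{U}=\{U_1,\dots,U_{n-1}\}\in\mathcal{A}$ there is an $(\alpha-1)$-dimensional subspace $U_n$ obtained from $\mathcal{U}$ by $(r,\beta)$-repair such that $\mathcal{U}\cup\{U_n\}\setminus\{U_i\}\in\mathcal{A}$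 for every $i=1,\dots,n-1$. Standing assumptions: $m,n\ge2$, $1\le k<n$, $k\le r\le n-1$, $1\le\alpha\le m-1$, $1\le\beta\le\alpha$. *)

theory Defs
  imports "HOL-Analysis.Analysis"
begin

text \<open>Sigma = PG(m-1,q) is modelled by the vector space 'a^'n over a finite field 'a
  (q = CARD('a)), with m = CARD('n). A projective (d-1)-dimensional subspace is a
  d-dimensional vector subspace.\<close>

definition pg_sub :: "nat \<Rightarrow> ('a::field ^ 'n) set \<Rightarrow> bool" where
  "pg_sub d U \<longleftrightarrow> vec.subspace U \<and> vec.dim U = d"

definition repair_obtained ::
  "nat \<Rightarrow> nat \<Rightarrow> ('a::field ^ 'n) set set \<Rightarrow> ('a ^ 'n) set \<Rightarrow> bool" where
  "repair_obtained r \<beta> UU U' \<longleftrightarrow>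
     (\<exists>S W. S \<subseteq> UU \<and> card S = r \<and>
        (\<forall>V\<in>S. W V \<subseteq> V \<and> pg_sub \<beta> (W V)) \<and>
        U' \<subseteq> vec.span (\<Union>V\<in>S. W V))"

definition functional_repair_code ::
  "nat \<Rightarrow> nat \<Rightarrow> nat \<Rightarrow> nat \<Rightarrow> nat \<Rightarrow> nat \<Rightarrow> ('a::{field,finite} ^ 'n) set set set \<Rightarrow> bool" where
  "functional_repair_code m n k r \<alpha> \<beta> A \<longleftrightarrow>
     m = CARD('n) \<and> m \<ge> 2 \<and> n \<ge> 2 \<and> 1 \<le> k \<and> k < n \<and> k \<le> r \<and> r \<le> n - 1 \<and>
     1 \<le> \<alpha> \<and> \<alpha> \<le> m - 1 \<and> 1 \<le> \<beta> \<and> \<beta> \<le> \<alpha> \<and>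
     A \<noteq> {} \<and>
     (\<forall>UU\<in>A. finite UU \<and> card UU = n - 1 \<and> (\<forall>U\<in>UU. pg_sub \<alpha> U)) \<and>
     (\<forall>UU\<in>A. \<exists>S\<subseteq>UU. card S = k \<and> vec.span (\<Union>S) = UNIV) \<and>
     (\<forall>UU\<in>A. \<exists>Unew. pg_sub \<alpha> Unew \<and> repair_obtained r \<beta> UU Unew \<and>
        (\<forall>Ui\<in>UU. (UU \<union> {Unew}) - {Ui} \<in> A))"

end

theory Submission
  imports Defs
begin

lemma dim_un_le:
  fixes A B :: "('a::field ^ 'n) set"
  shows "vec.dim (A \<union> B) \<le> vec.dim A + vec.dim B"
proof -
  obtain BA where BA: "BA \<subseteq> A" "vec.independent BA" "A \<subseteq> vec.span BA" "card BA = vec.dim A"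
    using vec.basis_exists by blast
  obtain BB where BB: "BB \<subseteq> B" "vec.independent BB" "B \<subseteq> vec.span BB" "card BB = vec.dim B"
    using vec.basis_exists by blast
  have f: "finite BA" "finite BB" using vec.finiteI_independent[OF BA(2)] vec.finiteI_independent[OF BB(2)] by auto
  have "A \<union> B \<subseteq> vec.span (BA \<union> BB)"
    using BA(3) BB(3) vec.span_mono[of BA "BA \<union> BB"] vec.span_mono[of BB "BA \<union> BB"] by blast
  then have "vec.dim (A \<union> B) \<le> card (BA \<union> BB)"
    using vec.dim_le_card f by blast
  also have "\<dots> \<le> card BA + card BB" by (rule card_Un_le)
  finally show ?thesis using BA BB by simp
qed

lemma dim_UN_le:
  fixes W :: "'b \<Rightarrow> ('a::field ^ 'n) set"
  assumes "finite X"
  shows "vec.dim (\<Union>V\<in>X. W V) \<le> (\<Sum>V\<in>X. vec.dim (W V))"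
  using assms
proof (induction X rule: finite_induct)
  case empty
  then show ?case by simp
next
  case (insert x F)
  have "vec.dim (\<Union>V\<in>insert x F. W V) = vec.dim (W x \<union> (\<Union>V\<in>F. W V))" by simp
  also have "\<dots> \<le> vec.dim (W x) + vec.dim (\<Union>V\<in>F. W V)" by (rule dim_un_le)
  also have "\<dots> \<le> vec.dim (W x) + (\<Sum>V\<in>F. vec.dim (W V))" using insert by simp
  finally show ?case using insert by simp
qed

lemma code_D:
  fixes A :: "('a::{field,finite} ^ 'n) set set set"
  assumes "functional_repair_code m n k r \<alpha> \<beta> A"
  shows "m = CARD('n)" "1 \<le> k" "k \<le> r" "A \<noteq> {}"
    "\<forall>UU\<in>A. finite UU \<and> card UU = n - 1 \<and> (\<forall>U\<in>UU. pg_sub \<alpha> U)"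
    "\<forall>UU\<in>A. \<exists>S\<subseteq>UU. card S = k \<and> vec.span (\<Union>S) = UNIV"
    "\<forall>UU\<in>A. \<exists>Unew. pg_sub \<alpha> Unew \<and> repair_obtained r \<beta> UU Unew \<and>
        (\<forall>Ui\<in>UU. (UU \<union> {Unew}) - {Ui} \<in> A)"
  using assms unfolding functional_repair_code_def
  apply -
  apply (elim conjE, assumption)+
  done

lemma invariant:
  fixes A :: "('a::{field,finite} ^ 'n) set set set"
  assumes code: "functional_repair_code m (r + 1) k r \<alpha> 1 A"
  shows "t \<le> r \<Longrightarrow> \<exists>UU\<in>A. \<exists>N\<subseteq>UU. card N = t \<and>
     (\<forall>T\<subseteq>N. vec.dim (\<Union>T) \<le> (\<Sum>i=1..card T. min \<alpha> (r + 1 - i)))"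
proof (induction t)
  case 0
  from code_D(4)[OF code] have "A \<noteq> {}" .
  then obtain UU where "UU \<in> A" by blast
  then show ?case by (intro bexI[of _ UU] exI[of _ "{}"]) auto
next
  case (Suc t)
  define f where "f = (\<lambda>s. (\<Sum>i=1..s. min \<alpha> (r + 1 - i)))"
  have tr: "t \<le> r" using Suc.prems by simp
  obtain UU N where UU: "UU \<in> A" and N: "N \<subseteq> UU" "card N = t"
    and IH0: "\<forall>T\<subseteq>N. vec.dim (\<Union>T) \<le> (\<Sum>i=1..card T. min \<alpha> (r + 1 - i))"
    using Suc.IH[OF tr] by blast
  have IH: "\<forall>T\<subseteq>N. vec.dim (\<Union>T) \<le> f (card T)" using IH0 unfolding f_def by simp
  have c1: "\<forall>UU\<in>A. finite UU \<and> card UU = r + 1 - 1 \<and> (\<forall>U\<in>UU. pg_sub \<alpha> U)"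
    using code_D[OF code] by simp
  have c2: "\<forall>UU\<in>A. \<exists>Unew. pg_sub \<alpha> Unew \<and> repair_obtained r 1 UU Unew \<and>
        (\<forall>Ui\<in>UU. (UU \<union> {Unew}) - {Ui} \<in> A)"
    using code_D[OF code] by simp
  have c3: "1 \<le> k" "k \<le> r"
    using code_D[OF code] by simp_all
  have props: "finite UU" "card UU = r" "\<forall>U\<in>UU. pg_sub \<alpha> U"
    using c1 UU by simp_all
  obtain Unew where Unew: "pg_sub \<alpha> Unew" "repair_obtained r 1 UU Unew"
    "\<forall>Ui\<in>UU. (UU \<union> {Unew}) - {Ui} \<in> A"
    using c2 UU by blast
  obtain S W where SW: "S \<subseteq> UU" "card S = r" "\<forall>V\<in>S. W V \<subseteq> V \<and> pg_sub 1 (W V)"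
    "Unew \<subseteq> vec.span (\<Union>V\<in>S. W V)"
    using Unew(2) unfolding repair_obtained_def by blast
  have SUU: "S = UU" using card_subset_eq[OF props(1) SW(1)] SW(2) props(2) by simp
  have rpos: "0 < r" using c3 by simp
  have cardA: "\<forall>X\<in>A. card X = r"
    using c1 by simp
  have fN: "finite N" using N props finite_subset by blast
  have "t < r" using Suc by simp
  then have "N \<noteq> UU" using N props by auto
  then obtain Ui where Ui: "Ui \<in> UU" "Ui \<notin> N" using N by blast
  have notin: "Unew \<notin> UU"
  proof
    assume "Unew \<in> UU"
    then have "(UU \<union> {Unew}) - {Ui} = UU - {Ui}" by auto
    then have "card ((UU \<union> {Unew}) - {Ui}) = r - 1" using props Ui by simp
    moreover have "card ((UU \<union> {Unew}) - {Ui}) = r" using cardA Unew(3) Ui by blast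
    ultimately show False using rpos by simp
  qed
  define UU' where "UU' = (UU \<union> {Unew}) - {Ui}"
  define N' where "N' = insert Unew N"
  have UU'A: "UU' \<in> A" using Unew(3) Ui unfolding UU'_def by blast
  have N'sub: "N' \<subseteq> UU'" using N Ui notin unfolding N'_def UU'_def by auto
  have nN: "Unew \<notin> N" using N notin by blast
  have cardN': "card N' = Suc t" using fN nN N(2) unfolding N'_def by simp
  have main: "vec.dim (\<Union>T) \<le> f (card T)" if T: "T \<subseteq> N'" for T
  proof (cases "Unew \<in> T")
    case False
    then have "T \<subseteq> N" using T unfolding N'_def by auto
    then show ?thesis using IH by blast
  next
    case True
    define T0 where "T0 = T - {Unew}"
    have T0N: "T0 \<subseteq> N" using T unfolding T0_def N'_def by auto
    have fT0: "finite T0" using T0N fN finite_subset by blast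
    have fT: "finite T" using T fN finite_subset unfolding N'_def by blast
    have cT: "card T = Suc (card T0)"
      using card_Suc_Diff1[OF fT True] unfolding T0_def by simp
    have UT: "\<Union>T = \<Union>T0 \<union> Unew" using True unfolding T0_def by auto
    have T0UU: "T0 \<subseteq> UU" using T0N N by blast
    have IT0: "vec.dim (\<Union>T0) \<le> f (card T0)" using IH T0N by blast
    have d1: "vec.dim (\<Union>T0 \<union> Unew) \<le> f (card T0) + \<alpha>"
    proof -
      have "vec.dim (\<Union>T0 \<union> Unew) \<le> vec.dim (\<Union>T0) + vec.dim Unew" by (rule dim_un_le)
      moreover have "vec.dim Unew = \<alpha>" using Unew(1) unfolding pg_sub_def by simp
      ultimately show ?thesis using IT0 by linarith
    qed
    define Y where "Y = (\<Union>V\<in>UU - T0. W V)"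
    have d2: "vec.dim (\<Union>T0 \<union> Unew) \<le> f (card T0) + (r - card T0)"
    proof -
      have WV: "W V \<subseteq> V" "vec.dim (W V) = 1" if "V \<in> UU" for V
        using SW(3) SUU that unfolding pg_sub_def by auto
      have "(\<Union>V\<in>UU. W V) \<subseteq> \<Union>T0 \<union> Y"
      proof
        fix x assume "x \<in> (\<Union>V\<in>UU. W V)"
        then obtain V where V: "V \<in> UU" "x \<in> W V" by blast
        show "x \<in> \<Union>T0 \<union> Y"
        proof (cases "V \<in> T0")
          case True then show ?thesis using V WV(1)[OF V(1)] by blast
        next
          case False then show ?thesis using V unfolding Y_def by blast
        qed
      qed
      then have "vec.span (\<Union>V\<in>UU. W V) \<subseteq> vec.span (\<Union>T0 \<union> Y)"
        by (rule vec.span_mono)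
      moreover have "\<Union>T0 \<subseteq> vec.span (\<Union>T0 \<union> Y)"
        using vec.span_superset[of "\<Union>T0 \<union> Y"] by blast
      moreover have "Unew \<subseteq> vec.span (\<Union>V\<in>UU. W V)" using SW(4) SUU by simp
      ultimately have "\<Union>T0 \<union> Unew \<subseteq> vec.span (\<Union>T0 \<union> Y)"
        by blast
      then have e1: "vec.dim (\<Union>T0 \<union> Unew) \<le> vec.dim (\<Union>T0 \<union> Y)" by (rule vec.dim_mono)
      have e2: "vec.dim (\<Union>T0 \<union> Y) \<le> vec.dim (\<Union>T0) + vec.dim Y" by (rule dim_un_le)
      have e3: "vec.dim Y \<le> (\<Sum>V\<in>UU - T0. vec.dim (W V))"
        unfolding Y_def using props(1) by (intro dim_UN_le) simp
      have e4: "(\<Sum>V\<in>UU - T0. vec.dim (W V)) = (\<Sum>V\<in>UU - T0. 1)"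
        using WV(2) by (intro sum.cong) auto
      have e5: "(\<Sum>V\<in>UU - T0. (1::nat)) = r - card T0"
        using props T0UU fT0 by (simp add: card_Diff_subset)
      show ?thesis using e1 e2 e3 e4 e5 IT0 by linarith
    qed
    have "f (card T) = f (card T0) + min \<alpha> (r - card T0)"
      unfolding f_def cT by simp
    then show ?thesis using d1 d2 UT by simp
  qed
  show ?case using UU'A N'sub cardN' main unfolding f_def by blast
qed

theorem mainTheorem1:
  fixes A :: "('a::{field,finite} ^ 'n) set set set"
    and m r k \<alpha> :: nat
  assumes "0 < m" "0 < r" "0 < k" "0 < \<alpha>"
    and "functional_repair_code m (r + 1) k r \<alpha> 1 A"
  shows "m \<le> (\<Sum>i=1..k. min \<alpha> ((r - k) + i))"
proof -
  have code: "functional_repair_code m (r + 1) k r \<alpha> 1 A" by fact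
  obtain UU N where UU: "UU \<in> A" and N: "N \<subseteq> UU" "card N = r"
    and H: "\<forall>T\<subseteq>N. vec.dim (\<Union>T) \<le> (\<Sum>i=1..card T. min \<alpha> (r + 1 - i))"
    using invariant[OF code, of r] by blast
  have c1: "finite UU" "card UU = r"
    using code_D(5)[OF code] UU by simp_all
  have mc: "m = CARD('n)" "k \<le> r" using code_D[OF code] by simp_all
  have NU: "N = UU" using card_subset_eq[OF c1(1) N(1)] N(2) c1(2) by simp
  obtain S where S: "S \<subseteq> UU" "card S = k" "vec.span (\<Union>S) = UNIV"
    using code_D(6)[OF code] UU by blast
  have "vec.dim (\<Union>S) = vec.dim (UNIV :: ('a ^ 'n) set)"
    using S(3) vec.dim_span by metis
  also have "\<dots> = m" using mc vec_dim_card by simp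
  finally have dS: "vec.dim (\<Union>S) = m" .
  have "vec.dim (\<Union>S) \<le> (\<Sum>i=1..card S. min \<alpha> (r + 1 - i))"
    using H S(1) NU by blast
  then have "m \<le> (\<Sum>i=1..k. min \<alpha> (r + 1 - i))"
    using dS S(2) by simp
  also have "(\<Sum>i=1..k. min \<alpha> (r + 1 - i)) = (\<Sum>i=1..k. min \<alpha> (r + 1 - (k + 1 - i)))"
    by (rule sum.atLeastAtMost_rev)
  also have "\<dots> = (\<Sum>i=1..k. min \<alpha> ((r - k) + i))"
    using mc by (intro sum.cong) auto
  finally show ?thesis .
qed

end
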